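(* Let $G=(V,E)$ be a finite simple oriented complete graph on $N$ vertices. Then $G$ can be transformed into a directed acyclic graph by a sequence of at most $\frac{|E|}{2}=\frac{N^2-N}{4}$ Single Edge Flips such that the number of directed 3-cycles strictly decreases with each application of a Single Edge Flip.
   Context: A simple oriented graph is a pair $G=(V,E)$ with $E\subseteq\{(i,j)\in V\times V: i\neq j\}$ such that $(i,j)\in E$ implies $(j,i)\notin E$. It is complete if for all distinct $i,j\in V$ exactly one of $(i,j),(j,i)$ lies in $E$ (a tournament). For $(i,j)\in E$, the Single Edge Flip $\mathrm{SEF}_{i,j}$ maps $G$ to $(V,(E\setminus\{(i,j)\})\cup\{(j,i)\})$. A directed 3-cycle is a set of three vertices $\{a,b,c\}$ with $(a,b),(b,c),(c,a)\in E$. *)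

theory Defs
  imports Main
begin

definition simple_oriented :: "'a set \<Rightarrow> ('a \<times> 'a) set \<Rightarrow> bool" where
  "simple_oriented V E \<longleftrightarrow> E \<subseteq> V \<times> V \<and> (\<forall>(i,j)\<in>E. i \<noteq> j) \<and> (\<forall>(i,j)\<in>E. (j,i) \<notin> E)"

definition complete_oriented :: "'a set \<Rightarrow> ('a \<times> 'a) set \<Rightarrow> bool" where
  "complete_oriented V E \<longleftrightarrow> simple_oriented V E \<and>
     (\<forall>i\<in>V. \<forall>j\<in>V. i \<noteq> j \<longrightarrow> ((i,j) \<in> E \<longleftrightarrow> (j,i) \<notin> E))"

definition SEF :: "'a \<Rightarrow> 'a \<Rightarrow> ('a \<times> 'a) set \<Rightarrow> ('a \<times> 'a) set" where
  "SEF i j E = (E - {(i,j)}) \<union> {(j,i)}"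

definition three_cycles :: "('a \<times> 'a) set \<Rightarrow> 'a set set" where
  "three_cycles E = {{a,b,c} | a b c. (a,b) \<in> E \<and> (b,c) \<in> E \<and> (c,a) \<in> E}"

end

theory Submission
  imports Defs
begin

lemma cycles_split:
  assumes so: "simple_oriented V E" and uv: "(u,v) \<in> E" and fin: "finite V"
  shows "card (three_cycles E) = card {S\<in>three_cycles E. \<not> {u,v} \<subseteq> S} + card {w. (v,w)\<in>E \<and> (w,u)\<in>E}"
proof -
  have EV: "E \<subseteq> V \<times> V" and irr: "\<And>x. (x,x) \<notin> E" and asym: "\<And>x y. (x,y)\<in>E \<Longrightarrow> (y,x) \<notin> E"
    using so unfolding simple_oriented_def by auto
  define A where "A = {w. (v,w)\<in>E \<and> (w,u)\<in>E}"
  define T0 where "T0 = {S\<in>three_cycles E. \<not> {u,v} \<subseteq> S}"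
  have uv': "u \<noteq> v" using uv irr by auto
  have split: "three_cycles E = T0 \<union> (\<lambda>w. {u,v,w}) ` A"
  proof (intro equalityI subsetI)
    fix S assume S: "S \<in> three_cycles E"
    show "S \<in> T0 \<union> (\<lambda>w. {u,v,w}) ` A"
    proof (cases "{u,v} \<subseteq> S")
      case False thus ?thesis using S unfolding T0_def by auto
    next
      case True
      from S obtain a b c where abc: "S = {a,b,c}" "(a,b)\<in>E" "(b,c)\<in>E" "(c,a)\<in>E"
        unfolding three_cycles_def by auto
      have nvu: "(v,u) \<notin> E" using asym uv by blast
      have u: "u = a \<or> u = b \<or> u = c" and v: "v = a \<or> v = b \<or> v = c" using True abc(1) by auto
      have "\<exists>w\<in>A. S = {u,v,w}"
      proof -
        consider "u = a" "v = b" | "u = b" "v = c" | "u = c" "v = a"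
          using u v uv' nvu abc(2,3,4) by blast
        then show ?thesis
        proof cases
          case 1
          then have "S = {u,v,c}" "c \<in> A" using abc unfolding A_def by auto
          then show ?thesis by blast
        next
          case 2
          then have "S = {u,v,a}" "a \<in> A" using abc unfolding A_def by auto
          then show ?thesis by blast
        next
          case 3
          then have "S = {u,v,b}" "b \<in> A" using abc unfolding A_def by auto
          then show ?thesis by blast
        qed
      qed
      then show ?thesis by blast
    qed
  next
    fix S assume "S \<in> T0 \<union> (\<lambda>w. {u,v,w}) ` A"
    then show "S \<in> three_cycles E"
      unfolding T0_def A_def three_cycles_def using uv by blast
  qed
  have finA: "finite A" using EV fin unfolding A_def
    by (rule_tac finite_subset[of _ V]) auto
  have finT: "finite (three_cycles E)"
  proof (rule finite_subset[of _ "Pow V"])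
    show "three_cycles E \<subseteq> Pow V" using EV unfolding three_cycles_def by auto
  qed (use fin in auto)
  have finT0: "finite T0" using finT unfolding T0_def by auto
  have injA: "inj_on (\<lambda>w. {u,v,w}) A"
  proof (rule inj_onI)
    fix x y assume "x \<in> A" "y \<in> A" "{u,v,x} = {u,v,y}"
    moreover have "x \<noteq> u" "x \<noteq> v" "y \<noteq> u" "y \<noteq> v" using calculation(1,2) asym irr unfolding A_def by auto
    moreover have "x \<in> {u,v,y}" using calculation(3) by blast
    ultimately show "x = y" by blast
  qed
  have disj: "T0 \<inter> (\<lambda>w. {u,v,w}) ` A = {}" unfolding T0_def by auto
  have "card (three_cycles E) = card T0 + card ((\<lambda>w. {u,v,w}) ` A)"
    unfolding split by (rule card_Un_disjoint) (use finT0 finA disj in auto)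
  also have "\<dots> = card T0 + card A" using card_image[OF injA] by simp
  finally show ?thesis unfolding T0_def A_def .
qed

lemma co_facts:
  assumes "complete_oriented V E"
  shows "E \<subseteq> V \<times> V" and "\<And>x. (x,x) \<notin> E" and "\<And>x y. (x,y)\<in>E \<Longrightarrow> (y,x) \<notin> E"
    and "\<And>i j. i \<in> V \<Longrightarrow> j \<in> V \<Longrightarrow> i \<noteq> j \<Longrightarrow> (i,j) \<in> E \<or> (j,i) \<in> E"
proof -
  have s: "simple_oriented V E" and t: "\<forall>i\<in>V. \<forall>j\<in>V. i \<noteq> j \<longrightarrow> ((i,j) \<in> E \<longleftrightarrow> (j,i) \<notin> E)"
    using assms unfolding complete_oriented_def by blast+
  have a: "E \<subseteq> V \<times> V" and b: "\<forall>(i,j)\<in>E. i \<noteq> j" and c: "\<forall>(i,j)\<in>E. (j,i) \<notin> E"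
    using s unfolding simple_oriented_def by blast+
  show "E \<subseteq> V \<times> V" by (rule a)
  show "(x,x) \<notin> E" for x using b by fast
  show "(y,x) \<notin> E" if "(x,y) \<in> E" for x y using c that by fast
  show "(i,j) \<in> E \<or> (j,i) \<in> E" if "i \<in> V" "j \<in> V" "i \<noteq> j" for i j using t that by blast
qed

lemma SEF_complete:
  assumes "complete_oriented V E" "(u,v) \<in> E"
  shows "complete_oriented V (SEF u v E)"
proof -
  note EV = co_facts(1)[OF assms(1)] and irr = co_facts(2)[OF assms(1)] and asym = co_facts(3)[OF assms(1)]
  have tot: "\<And>i j. i \<in> V \<Longrightarrow> j \<in> V \<Longrightarrow> i \<noteq> j \<Longrightarrow> (i,j) \<in> E \<longleftrightarrow> (j,i) \<notin> E"
    using co_facts(3,4)[OF assms(1)] by blast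
  have uvV: "u \<in> V" "v \<in> V" "u \<noteq> v" using EV assms(2) irr by auto
  have mem: "(x,y) \<in> SEF u v E \<longleftrightarrow> ((x,y) \<in> E \<and> (x,y) \<noteq> (u,v)) \<or> (x,y) = (v,u)" for x y
    unfolding SEF_def by blast
  have 1: "SEF u v E \<subseteq> V \<times> V" using EV uvV unfolding SEF_def by auto
  have 2: "\<forall>(i,j)\<in>SEF u v E. i \<noteq> j" using irr uvV unfolding SEF_def by blast
  have 3: "\<forall>(i,j)\<in>SEF u v E. (j,i) \<notin> SEF u v E"
  proof (intro ballI, clarify)
    fix i j assume a: "(i,j) \<in> SEF u v E" "(j,i) \<in> SEF u v E"
    show False using a[unfolded mem] asym assms(2) by blast
  qed
  have 4: "\<forall>i\<in>V. \<forall>j\<in>V. i \<noteq> j \<longrightarrow> ((i,j) \<in> SEF u v E \<longleftrightarrow> (j,i) \<notin> SEF u v E)"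
  proof (intro ballI impI)
    fix i j assume "i \<in> V" "j \<in> V" "i \<noteq> j"
    then have t: "(i,j) \<in> E \<longleftrightarrow> (j,i) \<notin> E" using tot by blast
    show "(i,j) \<in> SEF u v E \<longleftrightarrow> (j,i) \<notin> SEF u v E"
      unfolding mem using t assms(2) asym by blast
  qed
  have "simple_oriented V (SEF u v E)" unfolding simple_oriented_def using 1 2 3 by (intro conjI)
  then show ?thesis unfolding complete_oriented_def using 4 by (intro conjI)
qed

lemma cycles_flip:
  assumes co: "complete_oriented V E" and uv: "(u,v) \<in> E" and fin: "finite V"
    and lt: "card {w. (u,w)\<in>E \<and> (w,v)\<in>E} < card {w. (v,w)\<in>E \<and> (w,u)\<in>E}"
  shows "card (three_cycles (SEF u v E)) < card (three_cycles E)"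
proof -
  let ?E' = "SEF u v E"
  have co': "complete_oriented V ?E'" using SEF_complete[OF co uv] .
  have so: "simple_oriented V E" "simple_oriented V ?E'" using co co' unfolding complete_oriented_def by blast+
  have vu: "(v,u) \<in> ?E'" unfolding SEF_def by auto
  note irr = co_facts(2)[OF co]
  have vuE: "(v,u) \<notin> E" using co_facts(3)[OF co uv] .
  have 1: "card (three_cycles E) = card {S\<in>three_cycles E. \<not> {u,v} \<subseteq> S} + card {w. (v,w)\<in>E \<and> (w,u)\<in>E}"
    by (rule cycles_split[OF so(1) uv fin])
  have 2: "card (three_cycles ?E') = card {S\<in>three_cycles ?E'. \<not> {v,u} \<subseteq> S} + card {w. (u,w)\<in>?E' \<and> (w,v)\<in>?E'}"
    by (rule cycles_split[OF so(2) vu fin])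
  have 3: "{w. (u,w)\<in>?E' \<and> (w,v)\<in>?E'} = {w. (u,w)\<in>E \<and> (w,v)\<in>E}"
  proof -
    have "u \<noteq> v" using irr uv by auto
    then show ?thesis unfolding SEF_def using irr[of u] irr[of v] by auto
  qed
  have key: "(x,y) \<in> E \<longleftrightarrow> (x,y) \<in> ?E'" if "\<not> {u,v} \<subseteq> S" "x \<in> S" "y \<in> S" for x y S
    using that unfolding SEF_def by auto
  have 4: "{S\<in>three_cycles ?E'. \<not> {v,u} \<subseteq> S} = {S\<in>three_cycles E. \<not> {u,v} \<subseteq> S}"
  proof (intro equalityI subsetI)
    fix S assume "S \<in> {S\<in>three_cycles ?E'. \<not> {v,u} \<subseteq> S}"
    then obtain a b c where abc: "S = {a,b,c}" "(a,b)\<in>?E'" "(b,c)\<in>?E'" "(c,a)\<in>?E'" and n: "\<not> {u,v} \<subseteq> S"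
      unfolding three_cycles_def by auto
    have "(a,b)\<in>E" "(b,c)\<in>E" "(c,a)\<in>E" using key[OF n] abc by auto
    then show "S \<in> {S\<in>three_cycles E. \<not> {u,v} \<subseteq> S}" using abc(1) n unfolding three_cycles_def by blast
  next
    fix S assume "S \<in> {S\<in>three_cycles E. \<not> {u,v} \<subseteq> S}"
    then obtain a b c where abc: "S = {a,b,c}" "(a,b)\<in>E" "(b,c)\<in>E" "(c,a)\<in>E" and n: "\<not> {u,v} \<subseteq> S"
      unfolding three_cycles_def by auto
    have "(a,b)\<in>?E'" "(b,c)\<in>?E'" "(c,a)\<in>?E'" using key[OF n] abc by auto
    then show "S \<in> {S\<in>three_cycles ?E'. \<not> {v,u} \<subseteq> S}" using abc(1) n unfolding three_cycles_def
      by blast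
  qed
  have 5: "{S\<in>three_cycles E. \<not> {u,v} \<subseteq> S} = {S\<in>three_cycles E. \<not> {v,u} \<subseteq> S}" by blast
  show ?thesis using 1 2 3 4 lt by simp
qed

definition bw :: "('a \<Rightarrow> int) \<Rightarrow> ('a \<times> 'a) set \<Rightarrow> ('a \<times> 'a) set" where
  "bw r E = {p \<in> E. r (snd p) < r (fst p)}"

lemma bw_mem[simp]: "(x,y) \<in> bw r E \<longleftrightarrow> (x,y) \<in> E \<and> r y < r x"
  by (simp add: bw_def)

lemma move:
  assumes fin: "finite E"
    and same: "\<And>x y. x \<noteq> u \<Longrightarrow> y \<noteq> u \<Longrightarrow> (x,y) \<in> E \<Longrightarrow> (r y < r x \<longleftrightarrow> r' y < r' x)"
    and le: "card (bw r E) \<le> card (bw r' E)"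
  shows "card {x. (u,x)\<in>E \<and> r x < r u} + card {x. (x,u)\<in>E \<and> r u < r x}
       \<le> card {x. (u,x)\<in>E \<and> r' x < r' u} + card {x. (x,u)\<in>E \<and> r' u < r' x}"
proof -
  have dec: "card (bw s E) = card {p\<in>E. fst p \<noteq> u \<and> snd p \<noteq> u \<and> s (snd p) < s (fst p)}
     + (card {x. (u,x)\<in>E \<and> s x < s u} + card {x. (x,u)\<in>E \<and> s u < s x})" for s
  proof -
    let ?N = "{p\<in>E. fst p \<noteq> u \<and> snd p \<noteq> u \<and> s (snd p) < s (fst p)}"
    let ?O = "{x. (u,x)\<in>E \<and> s x < s u}"
    let ?I = "{x. (x,u)\<in>E \<and> s u < s x}"
    have eq: "bw s E = ?N \<union> (Pair u ` ?O \<union> (\<lambda>x. (x,u)) ` ?I)" by (auto simp: bw_def)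
    have fO: "finite ?O" by (rule finite_subset[of _ "snd ` E"]) (use fin in force)+
    have fI: "finite ?I" by (rule finite_subset[of _ "fst ` E"]) (use fin in force)+
    have fN: "finite ?N" using fin by auto
    have c1: "card (Pair u ` ?O \<union> (\<lambda>x. (x,u)) ` ?I) = card ?O + card ?I"
    proof -
      have "card (Pair u ` ?O \<union> (\<lambda>x. (x,u)) ` ?I) = card (Pair u ` ?O) + card ((\<lambda>x. (x,u)) ` ?I)"
        by (rule card_Un_disjoint) (use fO fI in auto)
      also have "\<dots> = card ?O + card ?I"
        by (subst card_image, simp add: inj_on_def)+ simp
      finally show ?thesis .
    qed
    have "card (bw s E) = card ?N + card (Pair u ` ?O \<union> (\<lambda>x. (x,u)) ` ?I)"
      unfolding eq by (rule card_Un_disjoint) (use fO fI fN in auto)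
    then show ?thesis using c1 by simp
  qed
  have "{p\<in>E. fst p \<noteq> u \<and> snd p \<noteq> u \<and> r (snd p) < r (fst p)} = {p\<in>E. fst p \<noteq> u \<and> snd p \<noteq> u \<and> r' (snd p) < r' (fst p)}"
    using same by auto
  then show ?thesis using le dec[of r] dec[of r'] by simp
qed

lemma good_flip:
  assumes fin: "finite V" and co: "complete_oriented V E" and inj: "inj_on r V"
    and opt: "\<And>r'. inj_on r' V \<Longrightarrow> card (bw r E) \<le> card (bw r' E)"
    and ne: "bw r E \<noteq> {}"
  shows "\<exists>u v. (u,v) \<in> bw r E \<and> card {w. (u,w)\<in>E \<and> (w,v)\<in>E} < card {w. (v,w)\<in>E \<and> (w,u)\<in>E}"
proof -
  note EV = co_facts(1)[OF co] and irr = co_facts(2)[OF co] and asym = co_facts(3)[OF co]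
    and tot = co_facts(4)[OF co]
  have finE: "finite E" using EV fin by (meson finite_SigmaI finite_subset)
  have finB: "finite (bw r E)" using finE unfolding bw_def by auto
  let ?g = "\<lambda>p. r (fst p) - r (snd p)"
  define M where "M = Max (?g ` bw r E)"
  have "M \<in> ?g ` bw r E" unfolding M_def using finB ne by (intro Max_in) auto
  then obtain u v where uvB: "(u,v) \<in> bw r E" and uvM: "r u - r v = M" by auto
  have mx: "r x - r y \<le> r u - r v" if "(x,y) \<in> bw r E" for x y
  proof -
    have "?g (x,y) \<in> ?g ` bw r E" by (rule imageI[OF that])
    then have "?g (x,y) \<le> M" unfolding M_def using finB by (intro Max_ge) auto
    then show ?thesis using uvM by simp
  qed
  have uv: "(u,v) \<in> E" "r v < r u" using uvB by auto
  have uV: "u \<in> V" and vV: "v \<in> V" using uv EV by auto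
  have vu: "(v,u) \<notin> E" using asym uv by blast
  have lo: "(u,w) \<notin> E" if "r w < r v" for w
  proof
    assume "(u,w) \<in> E"
    then have "r u - r w \<le> r u - r v" using mx[of u w] that uv by auto
    then show False using that by auto
  qed
  have hi: "(w,v) \<notin> E" if "r u < r w" for w
  proof
    assume "(w,v) \<in> E"
    then have "r w - r v \<le> r u - r v" using mx[of w v] that uv by auto
    then show False using that by auto
  qed
  have injr: "x = y" if "x \<in> V" "y \<in> V" "r x = r y" for x y using inj that inj_on_def by metis
  define W where "W = {w\<in>V. r v < r w \<and> r w < r u}"
  define X where "X = {w\<in>W. (v,w)\<in>E}"
  define Y where "Y = {w\<in>W. (u,w)\<in>E}"
  have finW: "finite W" using fin unfolding W_def by auto
  have XW: "X \<subseteq> W" and YW: "Y \<subseteq> W" unfolding X_def Y_def by auto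
  have finX: "finite X" and finY: "finite Y" using finW XW YW finite_subset by auto
  have finV: "finite {x. P x \<and> x \<in> V}" for P using fin by auto
  have inV1: "x \<in> V" if "(x,y) \<in> E" for x y using EV that by auto
  have inV2: "y \<in> V" if "(x,y) \<in> E" for x y using EV that by auto
  \<comment> \<open>first move: u just before v\<close>
  define r1 where "r1 = (\<lambda>x. if x = u then 2 * r v - 1 else 2 * r x)"
  have inj1: "inj_on r1 V"
  proof (rule inj_onI)
    fix x y assume "x \<in> V" "y \<in> V" "r1 x = r1 y"
    then show "x = y" unfolding r1_def using injr by (auto split: if_splits) presburger+
  qed
  have m1: "card {x. (u,x)\<in>E \<and> r x < r u} + card {x. (x,u)\<in>E \<and> r u < r x}
       \<le> card {x. (u,x)\<in>E \<and> r1 x < r1 u} + card {x. (x,u)\<in>E \<and> r1 u < r1 x}"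
    by (rule move[OF finE _ opt[OF inj1]]) (auto simp: r1_def)
  have O1: "{x. (u,x)\<in>E \<and> r x < r u} = {x. (u,x)\<in>E \<and> r1 x < r1 u} \<union> ({v} \<union> Y)"
  proof (intro equalityI subsetI)
    fix x assume x: "x \<in> {x. (u,x)\<in>E \<and> r x < r u}"
    then have xV: "x \<in> V" and xu: "x \<noteq> u" using inV2 irr by auto
    consider "r x < r v" | "r x = r v" | "r v < r x" by linarith
    then show "x \<in> {x. (u,x)\<in>E \<and> r1 x < r1 u} \<union> ({v} \<union> Y)"
    proof cases
      case 1 then show ?thesis using x xu unfolding r1_def by auto
    next
      case 2 then show ?thesis using injr[OF xV vV] by auto
    next
      case 3 then show ?thesis using x xV unfolding Y_def W_def by auto
    qed
  next
    fix x assume "x \<in> {x. (u,x)\<in>E \<and> r1 x < r1 u} \<union> ({v} \<union> Y)"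
    moreover have "x \<noteq> u" if "(u,x) \<in> E" using irr that by auto
    ultimately show "x \<in> {x. (u,x)\<in>E \<and> r x < r u}" using uv unfolding r1_def Y_def W_def
      by (auto split: if_splits)
  qed
  have I1: "{x. (x,u)\<in>E \<and> r1 u < r1 x} = {x. (x,u)\<in>E \<and> r u < r x} \<union> (W - Y)"
  proof (intro equalityI subsetI)
    fix x assume x: "x \<in> {x. (x,u)\<in>E \<and> r1 u < r1 x}"
    then have xV: "x \<in> V" and xu: "x \<noteq> u" using inV1 irr by auto
    then have ge: "r v \<le> r x" using x unfolding r1_def by auto
    have xv: "x \<noteq> v" using x vu by auto
    then have "r x \<noteq> r v" "r x \<noteq> r u" using injr xV vV uV xu by auto
    then have "r u < r x \<or> (r v < r x \<and> r x < r u)" using ge by auto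
    then show "x \<in> {x. (x,u)\<in>E \<and> r u < r x} \<union> (W - Y)"
      using x xV asym[of x u] unfolding W_def Y_def by auto
  next
    fix x assume x: "x \<in> {x. (x,u)\<in>E \<and> r u < r x} \<union> (W - Y)"
    show "x \<in> {x. (x,u)\<in>E \<and> r1 u < r1 x}"
    proof (cases "x \<in> W - Y")
      case True
      then have "x \<in> V" "x \<noteq> u" "(u,x) \<notin> E" "r v < r x" unfolding W_def Y_def by auto
      then show ?thesis using tot[OF \<open>x \<in> V\<close> uV] unfolding r1_def by auto
    next
      case False
      then have "(x,u)\<in>E" "r u < r x" using x by auto
      moreover have "x \<noteq> u" using calculation irr by auto
      ultimately show ?thesis using uv unfolding r1_def by auto
    qed
  qed
  have finO1: "finite {x. (u,x)\<in>E \<and> r1 x < r1 u}"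
    by (rule finite_subset[OF _ fin]) (use inV2 in auto)
  have vY: "v \<notin> Y" unfolding Y_def W_def by auto
  have c1: "card {x. (u,x)\<in>E \<and> r x < r u} = card {x. (u,x)\<in>E \<and> r1 x < r1 u} + (1 + card Y)"
  proof -
    have d: "{x. (u,x)\<in>E \<and> r1 x < r1 u} \<inter> ({v} \<union> Y) = {}"
      using vu lo unfolding r1_def Y_def W_def by (auto split: if_splits)
    show ?thesis unfolding O1 using card_Un_disjoint[OF finO1 _ d] finY vY by simp
  qed
  have finI1: "finite {x. (x,u)\<in>E \<and> r u < r x}"
    by (rule finite_subset[OF _ fin]) (use inV1 in auto)
  have c2: "card {x. (x,u)\<in>E \<and> r1 u < r1 x} = card {x. (x,u)\<in>E \<and> r u < r x} + card (W - Y)"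
  proof -
    have d: "{x. (x,u)\<in>E \<and> r u < r x} \<inter> (W - Y) = {}" unfolding W_def by auto
    show ?thesis unfolding I1 using card_Un_disjoint[OF finI1 _ d] finW by simp
  qed
  have cWY: "card (W - Y) = card W - card Y" using card_Diff_subset[OF finY YW] .
  have cYW: "card Y \<le> card W" using card_mono[OF finW YW] .
  have ineq1: "1 + 2 * card Y \<le> card W" using m1 c1 c2 cWY cYW by linarith
  \<comment> \<open>second move: v just after u\<close>
  define r2 where "r2 = (\<lambda>x. if x = v then 2 * r u + 1 else 2 * r x)"
  have inj2: "inj_on r2 V"
  proof (rule inj_onI)
    fix x y assume "x \<in> V" "y \<in> V" "r2 x = r2 y"
    then show "x = y" unfolding r2_def using injr by (auto split: if_splits) presburger+
  qed
  have m2: "card {x. (v,x)\<in>E \<and> r x < r v} + card {x. (x,v)\<in>E \<and> r v < r x}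
       \<le> card {x. (v,x)\<in>E \<and> r2 x < r2 v} + card {x. (x,v)\<in>E \<and> r2 v < r2 x}"
    by (rule move[OF finE _ opt[OF inj2]]) (auto simp: r2_def)
  have O2: "{x. (v,x)\<in>E \<and> r2 x < r2 v} = {x. (v,x)\<in>E \<and> r x < r v} \<union> X"
  proof (intro equalityI subsetI)
    fix x assume x: "x \<in> {x. (v,x)\<in>E \<and> r2 x < r2 v}"
    then have xV: "x \<in> V" and xv: "x \<noteq> v" using inV2 irr by auto
    then have le: "r x \<le> r u" using x unfolding r2_def by auto
    have xu: "x \<noteq> u" using x vu by auto
    then have "r x \<noteq> r v" "r x \<noteq> r u" using injr xV vV uV xv by auto
    then have "r x < r v \<or> (r v < r x \<and> r x < r u)" using le by auto
    then show "x \<in> {x. (v,x)\<in>E \<and> r x < r v} \<union> X"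
      using x xV unfolding W_def X_def by auto
  next
    fix x assume x: "x \<in> {x. (v,x)\<in>E \<and> r x < r v} \<union> X"
    then have "(v,x) \<in> E" unfolding X_def by auto
    then have "x \<noteq> v" using irr by auto
    then show "x \<in> {x. (v,x)\<in>E \<and> r2 x < r2 v}" using x uv unfolding r2_def X_def W_def by auto
  qed
  have I2: "{x. (x,v)\<in>E \<and> r v < r x} = {x. (x,v)\<in>E \<and> r2 v < r2 x} \<union> ({u} \<union> (W - X))"
  proof (intro equalityI subsetI)
    fix x assume x: "x \<in> {x. (x,v)\<in>E \<and> r v < r x}"
    then have xV: "x \<in> V" and xv: "x \<noteq> v" using inV1 irr by auto
    consider "r u < r x" | "r x = r u" | "r x < r u" by linarith
    then show "x \<in> {x. (x,v)\<in>E \<and> r2 v < r2 x} \<union> ({u} \<union> (W - X))"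
    proof cases
      case 1 then show ?thesis using x xv unfolding r2_def by auto
    next
      case 2 then show ?thesis using injr[OF xV uV] by auto
    next
      case 3 then show ?thesis using x xV asym[of x v] unfolding X_def W_def by auto
    qed
  next
    fix x assume x: "x \<in> {x. (x,v)\<in>E \<and> r2 v < r2 x} \<union> ({u} \<union> (W - X))"
    show "x \<in> {x. (x,v)\<in>E \<and> r v < r x}"
    proof (cases "x \<in> W - X")
      case True
      then have "x \<in> V" "x \<noteq> v" "(v,x) \<notin> E" "r v < r x" unfolding W_def X_def by auto
      then show ?thesis using tot[OF \<open>x \<in> V\<close> vV] by auto
    next
      case False
      then have "x = u \<or> ((x,v)\<in>E \<and> r2 v < r2 x)" using x by auto
      then show ?thesis
      proof
        assume "x = u" then show ?thesis using uv by auto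
      next
        assume a: "(x,v)\<in>E \<and> r2 v < r2 x"
        then have "x \<noteq> v" using irr by auto
        then show ?thesis using a uv unfolding r2_def by auto
      qed
    qed
  qed
  have finO2: "finite {x. (v,x)\<in>E \<and> r x < r v}"
    by (rule finite_subset[OF _ fin]) (use inV2 in auto)
  have finI2: "finite {x. (x,v)\<in>E \<and> r2 v < r2 x}"
    by (rule finite_subset[OF _ fin]) (use inV1 in auto)
  have uWX: "u \<notin> W - X" unfolding W_def by auto
  have c3: "card {x. (v,x)\<in>E \<and> r2 x < r2 v} = card {x. (v,x)\<in>E \<and> r x < r v} + card X"
  proof -
    have d: "{x. (v,x)\<in>E \<and> r x < r v} \<inter> X = {}" unfolding X_def W_def by auto
    show ?thesis unfolding O2 using card_Un_disjoint[OF finO2 finX d] by simp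
  qed
  have c4: "card {x. (x,v)\<in>E \<and> r v < r x} = card {x. (x,v)\<in>E \<and> r2 v < r2 x} + (1 + card (W - X))"
  proof -
    have d: "{x. (x,v)\<in>E \<and> r2 v < r2 x} \<inter> ({u} \<union> (W - X)) = {}"
      using hi uv unfolding r2_def W_def by (auto split: if_splits)
    have "finite ({u} \<union> (W - X))" using finW by auto
    then show ?thesis unfolding I2 using card_Un_disjoint[OF finI2 _ d] uWX finW by simp
  qed
  have cWX: "card (W - X) = card W - card X" using card_Diff_subset[OF finX XW] .
  have cXW: "card X \<le> card W" using card_mono[OF finW XW] .
  have ineq2: "1 + card W \<le> 2 * card X" using m2 c3 c4 cWX cXW by linarith
  have YX: "card Y < card X" using ineq1 ineq2 by linarith
  have C: "{w. (u,w)\<in>E \<and> (w,v)\<in>E} \<subseteq> Y - X"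
  proof
    fix w assume w: "w \<in> {w. (u,w)\<in>E \<and> (w,v)\<in>E}"
    then have wV: "w \<in> V" and wu: "w \<noteq> u" and wv: "w \<noteq> v" using inV2 irr by auto
    have "r w \<noteq> r v" "r w \<noteq> r u" using injr wV uV vV wu wv by auto
    moreover have "\<not> r w < r v" using lo w by auto
    moreover have "\<not> r u < r w" using hi w by auto
    ultimately have "w \<in> W" using wV unfolding W_def by auto
    then show "w \<in> Y - X" using w asym[of w v] unfolding X_def Y_def by auto
  qed
  have A: "X - Y \<subseteq> {w. (v,w)\<in>E \<and> (w,u)\<in>E}"
  proof
    fix w assume w: "w \<in> X - Y"
    then have "w \<in> V" "w \<noteq> u" "(u,w) \<notin> E" "(v,w) \<in> E" unfolding X_def Y_def W_def by auto
    then show "w \<in> {w. (v,w)\<in>E \<and> (w,u)\<in>E}" using tot[OF _ uV] by auto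
  qed
  have finA: "finite {w. (v,w)\<in>E \<and> (w,u)\<in>E}"
    by (rule finite_subset[OF _ fin]) (use inV2 in auto)
  have "card (X - Y) + card (X \<inter> Y) = card X" using card_Int_Diff[OF finX, of Y] by simp
  moreover have "card (Y - X) + card (X \<inter> Y) = card Y" using card_Int_Diff[OF finY, of X] by (simp add: Int_commute)
  ultimately have "card (Y - X) < card (X - Y)" using YX by linarith
  moreover have "card {w. (u,w)\<in>E \<and> (w,v)\<in>E} \<le> card (Y - X)" using card_mono[OF _ C] finY by auto
  moreover have "card (X - Y) \<le> card {w. (v,w)\<in>E \<and> (w,u)\<in>E}" using card_mono[OF finA A] .
  ultimately have "card {w. (u,w)\<in>E \<and> (w,v)\<in>E} < card {w. (v,w)\<in>E \<and> (w,u)\<in>E}" by linarith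
  then show ?thesis using uvB by blast
qed

lemma main_ind:
  "finite V \<Longrightarrow> complete_oriented V E \<Longrightarrow> inj_on r V \<Longrightarrow>
   (\<forall>r'. inj_on r' V \<longrightarrow> card (bw r E) \<le> card (bw r' E)) \<Longrightarrow> card (bw r E) = n \<Longrightarrow>
   \<exists>Gs :: nat \<Rightarrow> ('a \<times> 'a) set. Gs 0 = E \<and>
     (\<forall>t<n. \<exists>(i,j)\<in>Gs t. Gs (Suc t) = SEF i j (Gs t) \<and>
                     card (three_cycles (Gs (Suc t))) < card (three_cycles (Gs t))) \<and>
     acyclic (Gs n)"
proof (induction n arbitrary: E)
  case 0
  note EV = co_facts(1)[OF "0.prems"(2)] and irr = co_facts(2)[OF "0.prems"(2)]
  have finE: "finite E" using EV "0.prems"(1) by (meson finite_SigmaI finite_subset)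
  have "finite (bw r E)" using finE unfolding bw_def by auto
  then have emp: "bw r E = {}" using "0.prems"(5) by simp
  have edge: "r x < r y" if "(x,y) \<in> E" for x y
  proof -
    have "x \<in> V" "y \<in> V" "x \<noteq> y" using that EV irr by auto
    then have "r x \<noteq> r y" using "0.prems"(3) by (meson inj_on_contraD)
    moreover have "\<not> r y < r x"
    proof
      assume "r y < r x"
      then have "(x,y) \<in> bw r E" using that by simp
      then show False using emp by simp
    qed
    ultimately show ?thesis by simp
  qed
  have "r x < r y" if "(x,y) \<in> E\<^sup>+" for x y
    using that by (induction rule: trancl_induct) (auto dest: edge)
  then have "acyclic E" unfolding acyclic_def by blast
  then show ?case by (intro exI[of _ "\<lambda>_. E"]) simp
next
  case (Suc n)
  have fin: "finite V" and co: "complete_oriented V E" and inj: "inj_on r V"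
    and opt: "\<And>r'. inj_on r' V \<Longrightarrow> card (bw r E) \<le> card (bw r' E)" and cn: "card (bw r E) = Suc n"
    using Suc.prems by auto
  note EV = co_facts(1)[OF co] and irr = co_facts(2)[OF co]
  have ne: "bw r E \<noteq> {}" using cn by auto
  obtain u v where uvB: "(u,v) \<in> bw r E" and lt: "card {w. (u,w)\<in>E \<and> (w,v)\<in>E} < card {w. (v,w)\<in>E \<and> (w,u)\<in>E}"
    using good_flip[OF fin co inj opt ne] by blast
  have uv: "(u,v) \<in> E" "r v < r u" using uvB by auto
  define E' where "E' = SEF u v E"
  have co': "complete_oriented V E'" unfolding E'_def by (rule SEF_complete[OF co uv(1)])
  have finE': "finite E'" using co_facts(1)[OF co'] fin by (meson finite_SigmaI finite_subset)
  have bwE': "bw r E' = bw r E - {(u,v)}"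
  proof -
    have "p \<in> bw r E' \<longleftrightarrow> p \<in> bw r E - {(u,v)}" for p
      using uv unfolding bw_def E'_def SEF_def by (cases p) auto
    then show ?thesis by blast
  qed
  have cn': "card (bw r E') = n" unfolding bwE' using uvB cn by simp
  have opt': "\<forall>r'. inj_on r' V \<longrightarrow> card (bw r E') \<le> card (bw r' E')"
  proof (intro allI impI)
    fix r' :: "'a \<Rightarrow> int" assume i: "inj_on r' V"
    have sub: "bw r' E \<subseteq> insert (u,v) (bw r' E')"
      unfolding bw_def E'_def SEF_def by auto
    have "finite (bw r' E')" using finE' unfolding bw_def by auto
    then have "card (bw r' E) \<le> Suc (card (bw r' E'))"
      using card_mono[OF _ sub] card_insert_le_m1 by (metis card_insert_if finite_insert le_SucI order_trans)
    then show "card (bw r E') \<le> card (bw r' E')" using opt[OF i] cn cn' by linarith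
  qed
  obtain Gs' where G0: "Gs' 0 = E'" and Gstep: "\<forall>t<n. \<exists>(i,j)\<in>Gs' t. Gs' (Suc t) = SEF i j (Gs' t) \<and>
                     card (three_cycles (Gs' (Suc t))) < card (three_cycles (Gs' t))" and Gac: "acyclic (Gs' n)"
    using Suc.IH[OF fin co' inj opt' cn'] by blast
  define Gs where "Gs = case_nat E Gs'"
  have "Gs 0 = E" unfolding Gs_def by simp
  moreover have "\<forall>t<Suc n. \<exists>(i,j)\<in>Gs t. Gs (Suc t) = SEF i j (Gs t) \<and>
                     card (three_cycles (Gs (Suc t))) < card (three_cycles (Gs t))"
  proof (intro allI impI)
    fix t assume t: "t < Suc n"
    show "\<exists>(i,j)\<in>Gs t. Gs (Suc t) = SEF i j (Gs t) \<and>
                     card (three_cycles (Gs (Suc t))) < card (three_cycles (Gs t))"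
    proof (cases t)
      case 0
      have "card (three_cycles (SEF u v E)) < card (three_cycles E)"
        by (rule cycles_flip[OF co uv(1) fin lt])
      then show ?thesis using 0 uv(1) G0 unfolding Gs_def E'_def by auto
    next
      case (Suc t')
      then have "t' < n" using t by simp
      then show ?thesis using Gstep Suc unfolding Gs_def by simp
    qed
  qed
  moreover have "acyclic (Gs (Suc n))" using Gac unfolding Gs_def by simp
  ultimately show ?case by blast
qed

theorem theoremA3:
  fixes V :: "'a set" and E :: "('a \<times> 'a) set"
  assumes "finite V" and "complete_oriented V E"
  shows "\<exists>k::nat. \<exists>Gs :: nat \<Rightarrow> ('a \<times> 'a) set.
           Gs 0 = E \<and>
           2 * k \<le> card E \<and>
           (\<forall>t<k. \<exists>(i,j)\<in>Gs t. Gs (Suc t) = SEF i j (Gs t) \<and>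
                     card (three_cycles (Gs (Suc t))) < card (three_cycles (Gs t))) \<and>
           acyclic (Gs k)"
proof -
  note fin = assms(1) and co = assms(2)
  note EV = co_facts(1)[OF co] and irr = co_facts(2)[OF co]
  have finE: "finite E" using EV fin by (meson finite_SigmaI finite_subset)
  obtain f :: "'a \<Rightarrow> nat" and m where "f ` V = {i. i < m}" "inj_on f V"
    using finite_imp_inj_to_nat_seg[OF fin] by blast
  then have "inj_on (\<lambda>x. int (f x)) V" by (simp add: inj_on_def)
  then obtain r where inj: "inj_on r V" and opt: "\<forall>r'. inj_on r' V \<longrightarrow> card (bw r E) \<le> card (bw r' E)"
    using ex_has_least_nat[where P = "\<lambda>r. inj_on r V" and m = "\<lambda>r. card (bw r E)"] by blast
  have injn: "inj_on (\<lambda>x. - r x) V" using inj by (simp add: inj_on_def)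
  have un: "E = bw r E \<union> bw (\<lambda>x. - r x) E"
  proof (intro equalityI subsetI)
    fix p assume p: "p \<in> E"
    obtain x y where xy: "p = (x,y)" by (cases p)
    have "x \<in> V" "y \<in> V" "x \<noteq> y" using p xy EV irr by auto
    then have "r x \<noteq> r y" using inj by (meson inj_on_contraD)
    then show "p \<in> bw r E \<union> bw (\<lambda>x. - r x) E" using p xy by auto
  qed (auto simp: bw_def)
  have dj: "bw r E \<inter> bw (\<lambda>x. - r x) E = {}" by (auto simp: bw_def)
  have "card E = card (bw r E) + card (bw (\<lambda>x. - r x) E)"
    by (subst un, rule card_Un_disjoint) (use finE dj in \<open>auto simp: bw_def\<close>)
  moreover have "card (bw r E) \<le> card (bw (\<lambda>x. - r x) E)" using opt injn by blast
  ultimately have le: "2 * card (bw r E) \<le> card E" by linarith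
  obtain Gs where "Gs 0 = E" "\<forall>t<card (bw r E). \<exists>(i,j)\<in>Gs t. Gs (Suc t) = SEF i j (Gs t) \<and>
                     card (three_cycles (Gs (Suc t))) < card (three_cycles (Gs t))" "acyclic (Gs (card (bw r E)))"
    using main_ind[OF fin co inj opt refl] by blast
  then show ?thesis using le by blast
qed

end
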